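(* Let $X$ be a set, and let $\tau_1$ and $\tau_2$ be topologies on $X$. Suppose $\mathbb{B}_1=\{\mathcal{B}_1(x):x\in X\}$ is a weak base for $\tau_1$ and $\mathbb{B}_2=\{\mathcal{B}_2(x):x\in X\}$ is a weak base for $\tau_2$. For each $x\in X$ let $\mathcal{B}(x)=\{B_1\cup B_2: B_1\in\mathcal{B}_1(x),\ B_2\in\mathcal{B}_2(x)\}$. Then $\mathbb{B}=\{\mathcal{B}(x):x\in X\}$ is a weak base for the meet $\tau_1\wedge\tau_2$ (the greatest lower bound of $\tau_1,\tau_2$ in the lattice of topologies on $X$, i.e. $\tau_1\cap\tau_2$).
   Context: A weak base on a set $X$ is a family $\mathbb{B}=\{\mathcal{B}(x):x\in X\}$ of filterbases such that $x\in B$ for all $B\in\mathcal{B}(x)$. The topology induced by $\mathbb{B}$ is the one in which $U\subseteq X$ is open iff for each $x\in U$ there is $B\in\mathcal{B}(x)$ with $B\subseteq U$. "$\mathbb{B}$ is a weak base for $\tau$" means that $\tau$ is the topology induced by $\mathbb{B}$. *)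

theory Defs
  imports "HOL-Analysis.Analysis"
begin

definition is_filterbase :: "'a set set \<Rightarrow> bool" where
  "is_filterbase F \<longleftrightarrow> F \<noteq> {} \<and> (\<forall>A\<in>F. \<forall>B\<in>F. \<exists>C\<in>F. C \<subseteq> A \<inter> B)"

definition weak_base_on :: "'a set \<Rightarrow> ('a \<Rightarrow> 'a set set) \<Rightarrow> bool" where
  "weak_base_on X \<B> \<longleftrightarrow>
     (\<forall>x\<in>X. is_filterbase (\<B> x) \<and> (\<forall>B\<in>\<B> x. x \<in> B \<and> B \<subseteq> X))"

definition weak_base_for :: "'a topology \<Rightarrow> ('a \<Rightarrow> 'a set set) \<Rightarrow> bool" where
  "weak_base_for T \<B> \<longleftrightarrow> weak_base_on (topspace T) \<B> \<and>
     (\<forall>U. openin T U \<longleftrightarrow> U \<subseteq> topspace T \<and> (\<forall>x\<in>U. \<exists>B\<in>\<B> x. B \<subseteq> U))"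

definition meet_topology :: "'a topology \<Rightarrow> 'a topology \<Rightarrow> 'a topology" where
  "meet_topology T1 T2 = topology (\<lambda>U. openin T1 U \<and> openin T2 U)"

end

theory Submission
  imports Defs
begin

lemma meet_open: "openin (meet_topology T1 T2) U \<longleftrightarrow> openin T1 U \<and> openin T2 U"
proof -
  have "istopology (\<lambda>U. openin T1 U \<and> openin T2 U)"
    unfolding istopology_def by auto
  then show ?thesis unfolding meet_topology_def by (simp add: topology_inverse')
qed

theorem lemma2p6:
  fixes X :: "'a set" and T1 T2 :: "'a topology" and B1 B2 :: "'a \<Rightarrow> 'a set set"
  assumes "topspace T1 = X" and "topspace T2 = X"
    and "weak_base_for T1 B1" and "weak_base_for T2 B2"
  shows "weak_base_for (meet_topology T1 T2)
           (\<lambda>x. {C. \<exists>b1\<in>B1 x. \<exists>b2\<in>B2 x. C = b1 \<union> b2})"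
proof -
  have ts: "topspace (meet_topology T1 T2) = X"
  proof (rule subset_antisym)
    show "topspace (meet_topology T1 T2) \<subseteq> X"
    proof -
      have "openin T1 (topspace (meet_topology T1 T2))"
        using meet_open openin_topspace by blast
      then show ?thesis using assms(1) openin_subset by blast
    qed
    have "openin T1 X" "openin T2 X" using openin_topspace[of T1] openin_topspace[of T2] assms(1,2) by simp_all
    then have "openin (meet_topology T1 T2) X" by (simp add: meet_open)
    then show "X \<subseteq> topspace (meet_topology T1 T2)" by (rule openin_subset)
  qed
  have c1: "weak_base_on X B1 \<and> (\<forall>U. openin T1 U \<longleftrightarrow> U \<subseteq> X \<and> (\<forall>x\<in>U. \<exists>B\<in>B1 x. B \<subseteq> U))"
    using assms(3) unfolding weak_base_for_def assms(1) .
  have c2: "weak_base_on X B2 \<and> (\<forall>U. openin T2 U \<longleftrightarrow> U \<subseteq> X \<and> (\<forall>x\<in>U. \<exists>B\<in>B2 x. B \<subseteq> U))"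
    using assms(4) unfolding weak_base_for_def assms(2) .
  have w1: "weak_base_on X B1" using c1 by (rule conjunct1)
  have w2: "weak_base_on X B2" using c2 by (rule conjunct1)
  have o1: "\<And>U. openin T1 U \<longleftrightarrow> U \<subseteq> X \<and> (\<forall>x\<in>U. \<exists>B\<in>B1 x. B \<subseteq> U)"
    using c1 by blast
  have o2: "\<And>U. openin T2 U \<longleftrightarrow> U \<subseteq> X \<and> (\<forall>x\<in>U. \<exists>B\<in>B2 x. B \<subseteq> U)"
    using c2 by blast
  have on: "weak_base_on X (\<lambda>x. {C. \<exists>b1\<in>B1 x. \<exists>b2\<in>B2 x. C = b1 \<union> b2})"
    unfolding weak_base_on_def
  proof (rule ballI)
    fix x assume x: "x \<in> X"
    have f1: "is_filterbase (B1 x)" and m1: "\<forall>B\<in>B1 x. x \<in> B \<and> B \<subseteq> X"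
      using w1 x unfolding weak_base_on_def by auto
    have f2: "is_filterbase (B2 x)" and m2: "\<forall>B\<in>B2 x. x \<in> B \<and> B \<subseteq> X"
      using w2 x unfolding weak_base_on_def by auto
    have M: "\<forall>B\<in>{C. \<exists>b1\<in>B1 x. \<exists>b2\<in>B2 x. C = b1 \<union> b2}. x \<in> B \<and> B \<subseteq> X"
      using m1 m2 by blast
    have "is_filterbase {C. \<exists>b1\<in>B1 x. \<exists>b2\<in>B2 x. C = b1 \<union> b2}"
      unfolding is_filterbase_def
    proof (intro conjI ballI)
      show "{C. \<exists>b1\<in>B1 x. \<exists>b2\<in>B2 x. C = b1 \<union> b2} \<noteq> {}"
      proof -
        obtain e1 where e1: "e1 \<in> B1 x" using f1 unfolding is_filterbase_def by blast
        obtain e2 where e2: "e2 \<in> B2 x" using f2 unfolding is_filterbase_def by blast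
        have "e1 \<union> e2 \<in> {C. \<exists>b1\<in>B1 x. \<exists>b2\<in>B2 x. C = b1 \<union> b2}" using e1 e2 by blast
        then show ?thesis by blast
      qed
    next
      fix A B assume A: "A \<in> {C. \<exists>b1\<in>B1 x. \<exists>b2\<in>B2 x. C = b1 \<union> b2}"
        and B: "B \<in> {C. \<exists>b1\<in>B1 x. \<exists>b2\<in>B2 x. C = b1 \<union> b2}"
      obtain a1 a2 where a: "a1 \<in> B1 x" "a2 \<in> B2 x" "A = a1 \<union> a2" using A by blast
      obtain b1 b2 where b: "b1 \<in> B1 x" "b2 \<in> B2 x" "B = b1 \<union> b2" using B by blast
      obtain c1 where c1: "c1 \<in> B1 x" "c1 \<subseteq> a1 \<inter> b1" using f1 a(1) b(1) unfolding is_filterbase_def by blast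
      obtain c2 where c2: "c2 \<in> B2 x" "c2 \<subseteq> a2 \<inter> b2" using f2 a(2) b(2) unfolding is_filterbase_def by blast
      show "\<exists>C\<in>{C. \<exists>b1\<in>B1 x. \<exists>b2\<in>B2 x. C = b1 \<union> b2}. C \<subseteq> A \<inter> B"
      proof (rule bexI[of _ "c1 \<union> c2"])
        show "c1 \<union> c2 \<subseteq> A \<inter> B" using c1(2) c2(2) a(3) b(3) by blast
        show "c1 \<union> c2 \<in> {C. \<exists>b1\<in>B1 x. \<exists>b2\<in>B2 x. C = b1 \<union> b2}" using c1(1) c2(1) by blast
      qed
    qed
    then show "is_filterbase {C. \<exists>b1\<in>B1 x. \<exists>b2\<in>B2 x. C = b1 \<union> b2} \<and> (\<forall>B\<in>{C. \<exists>b1\<in>B1 x. \<exists>b2\<in>B2 x. C = b1 \<union> b2}. x \<in> B \<and> B \<subseteq> X)"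
      using M by (rule conjI)
  qed
  define B where "B = (\<lambda>x. {C. \<exists>b1\<in>B1 x. \<exists>b2\<in>B2 x. C = b1 \<union> b2})"
  have key: "openin (meet_topology T1 T2) U \<longleftrightarrow> U \<subseteq> X \<and> (\<forall>x\<in>U. \<exists>C\<in>B x. C \<subseteq> U)" for U
  proof
    assume "openin (meet_topology T1 T2) U"
    then have p1: "openin T1 U" and p2: "openin T2 U" unfolding meet_open by simp_all
    have q1: "U \<subseteq> X \<and> (\<forall>x\<in>U. \<exists>C\<in>B1 x. C \<subseteq> U)" using p1 unfolding o1 .
    have q2: "U \<subseteq> X \<and> (\<forall>x\<in>U. \<exists>C\<in>B2 x. C \<subseteq> U)" using p2 unfolding o2 .
    show "U \<subseteq> X \<and> (\<forall>x\<in>U. \<exists>C\<in>B x. C \<subseteq> U)"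
    proof (intro conjI ballI)
      show "U \<subseteq> X" using q1 by (rule conjunct1)
      fix x assume x: "x \<in> U"
      obtain c1 where c1: "c1 \<in> B1 x" "c1 \<subseteq> U" using q1 x by blast
      obtain c2 where c2: "c2 \<in> B2 x" "c2 \<subseteq> U" using q2 x by blast
      show "\<exists>C\<in>B x. C \<subseteq> U"
      proof (rule bexI[of _ "c1 \<union> c2"])
        show "c1 \<union> c2 \<subseteq> U" using c1(2) c2(2) by (rule Un_least)
        show "c1 \<union> c2 \<in> B x" unfolding B_def using c1(1) c2(1) by blast
      qed
    qed
  next
    assume h: "U \<subseteq> X \<and> (\<forall>x\<in>U. \<exists>C\<in>B x. C \<subseteq> U)"
    have hU: "U \<subseteq> X" using h by (rule conjunct1)
    have hB: "\<forall>x\<in>U. \<exists>C\<in>B x. C \<subseteq> U" using h by (rule conjunct2)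
    have "U \<subseteq> X \<and> (\<forall>x\<in>U. \<exists>C\<in>B1 x. C \<subseteq> U)"
    proof (intro conjI ballI hU)
      fix x assume "x \<in> U"
      then obtain C where C: "C \<in> B x" "C \<subseteq> U" using hB by blast
      then obtain b1 b2 where "b1 \<in> B1 x" "C = b1 \<union> b2" unfolding B_def by blast
      then show "\<exists>C\<in>B1 x. C \<subseteq> U" using C(2) by blast
    qed
    then have "openin T1 U" unfolding o1 .
    moreover have "U \<subseteq> X \<and> (\<forall>x\<in>U. \<exists>C\<in>B2 x. C \<subseteq> U)"
    proof (intro conjI ballI hU)
      fix x assume "x \<in> U"
      then obtain C where C: "C \<in> B x" "C \<subseteq> U" using hB by blast
      then obtain b1 b2 where "b2 \<in> B2 x" "C = b1 \<union> b2" unfolding B_def by blast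
      then show "\<exists>C\<in>B2 x. C \<subseteq> U" using C(2) by blast
    qed
    then have "openin T2 U" unfolding o2 .
    ultimately show "openin (meet_topology T1 T2) U" unfolding meet_open by (rule conjI)
  qed
  have on': "weak_base_on X B" using on unfolding B_def .
  have "weak_base_for (meet_topology T1 T2) B"
    unfolding weak_base_for_def ts using on' key by blast
  then show ?thesis unfolding B_def .
qed

end
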